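(* Let $t\in[0,1]$ and let $(h,k)\in[0,1]^2$ be a point of ROC space that outperforms both baseline classifiers, i.e. $\mathrm{Cost}(h,k,t)<\mathrm{Cost}(0,0,t)$ and $\mathrm{Cost}(h,k,t)<\mathrm{Cost}(1,1,t)$. Then the area of lesser classifiers of $(h,k)$ is $$A_t(h,k)=1+\frac{(1-k)^2}{2}+\frac{h^2}{2}-h(1-k)-\frac{(1-k)^2}{2t}-\frac{h^2}{2(1-t)}.$$
   Context: ROC space is $[0,1]^2$, a point $(x,y)$ representing a binary classifier with false positive rate $x$ and true positive rate $y$. For $t\in[0,1]$, the normalized expected cost of $(x,y)$ is $\mathrm{Cost}(x,y,t)=tx+(1-t)(1-y)$. The baseline classifiers are the points $(0,0)$ (label everything negative) and $(1,1)$ (label everything positive). The area of lesser classifiers $A_t(h,k)$ is the area (Lebesgue measure) of the set of points $(h',k')\in[0,1]^2$ with $\mathrm{Cost}(h',k',t)>\mathrm{Cost}(h,k,t)$. *)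

theory Defs
  imports "HOL-Analysis.Analysis"
begin

text \<open>Normalized expected cost of the ROC point (x,y) (x = FPR, y = TPR) at cost parameter t.\<close>
definition Cost :: "real \<Rightarrow> real \<Rightarrow> real \<Rightarrow> real" where
  "Cost x y t = t * x + (1 - t) * (1 - y)"

definition area_lesser :: "real \<Rightarrow> real \<Rightarrow> real \<Rightarrow> real" where
  "area_lesser t h k =
     measure (lborel :: (real \<times> real) measure) {(h', k'). h' \<in> {0..1} \<and> k' \<in> {0..1} \<and>
                                     Cost h' k' t > Cost h k t}"

end

theory Submission
  imports Defs
begin

lemma tri_integral:
  fixes t c :: real
  assumes t0: "0 < t" and t1: "t < 1" and c0: "0 \<le> c"
  shows "((\<lambda>x. (c - t * x) / (1 - t)) has_integral c^2 / (2 * t * (1 - t))) {0..c/t}"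
proof -
  define F where "F = (\<lambda>x::real. c / (1 - t) * x - t / (2 * (1 - t)) * x^2)"
  have "((\<lambda>x. (c - t * x) / (1 - t)) has_integral (F (c/t) - F 0)) {0..c/t}"
  proof (rule fundamental_theorem_of_calculus)
    show "0 \<le> c / t" using t0 c0 by simp
    fix x assume "x \<in> {0..c / t}"
      show "(F has_vector_derivative (c - t * x) / (1 - t)) (at x within {0..c / t})"
      proof -
        have d: "(F has_real_derivative (c / (1 - t) - t / (2 * (1 - t)) * (2 * x))) (at x)"
          unfolding F_def using t1 by (auto intro!: derivative_eq_intros)
        have e: "c / (1 - t) - t / (2 * (1 - t)) * (2 * x) = (c - t * x) / (1 - t)"
        proof -
          have nz: "1 - t \<noteq> 0" using t1 by simp
          have "t / (2 * (1 - t)) * (2 * x) = t * x / (1 - t)" using nz by (simp add: divide_simps)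
          thus ?thesis by (simp add: diff_divide_distrib)
        qed
        show ?thesis
          using has_vector_derivative_at_within[OF d[unfolded e has_real_derivative_iff_has_vector_derivative]] .
      qed
  qed
  moreover have "F (c/t) - F 0 = c^2 / (2 * t * (1 - t))"
  proof -
    have gen: "\<And>u. u \<noteq> 0 \<Longrightarrow> c / u * (c / t) - t / (2 * u) * (c / t)^2 = c^2 / (2 * t * u)"
      using t0 by (simp add: field_simps power2_eq_square)
    have nz: "1 - t \<noteq> 0" using t1 by auto
    show ?thesis using gen[OF nz] by (simp add: F_def mult.commute)
  qed
  ultimately show ?thesis by simp
qed

theorem lemma22:
  fixes t h k :: real
  assumes "t \<in> {0..1}" and "h \<in> {0..1}" and "k \<in> {0..1}"
    and "Cost h k t < Cost 0 0 t" and "Cost h k t < Cost 1 1 t"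
  shows "area_lesser t h k =
    1 + (1 - k)^2 / 2 + h^2 / 2 - h * (1 - k) - (1 - k)^2 / (2 * t) - h^2 / (2 * (1 - t))"
proof -
  define c where "c = Cost h k t"
  have c1: "c < 1 - t" and c2: "c < t" using assms(4,5) by (simp_all add: c_def Cost_def)
  have c0: "0 \<le> c" using assms(1-3) by (simp add: c_def Cost_def)
  have t0: "0 < t" and t1: "t < 1" using c0 c1 c2 by linarith+
  define Sq where "Sq = {0..1::real} \<times> {0..1::real}"
  define T where "T = {p::real\<times>real. 0 \<le> fst p \<and> snd p \<le> 1 \<and> Cost (fst p) (snd p) t \<le> c}"
  have TSq: "T \<subseteq> Sq"
  proof
    fix p assume "p \<in> T"
    then obtain x y where p: "p = (x, y)" and x0: "0 \<le> x" and y1: "y \<le> 1"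
      and cc: "t * x + (1 - t) * (1 - y) \<le> c" by (cases p) (auto simp: T_def Cost_def)
    have "0 \<le> (1 - t) * (1 - y)" using t1 y1 by simp
    hence "t * x < t * 1" using cc c2 by linarith
    hence "x \<le> 1" using t0 by simp
    moreover have "0 \<le> t * x" using t0 x0 by simp
    hence "(1 - t) * (1 - y) < 1 - t" using cc c1 by linarith
    hence "(1 - t) * (1 - y) < (1 - t) * 1" by simp
    hence "0 \<le> y" using t1 by simp
    ultimately show "p \<in> Sq" using p x0 y1 by (simp add: Sq_def)
  qed
  have set_eq: "{(h', k'). h' \<in> {0..1} \<and> k' \<in> {0..1} \<and> Cost h' k' t > Cost h k t} = Sq - T"
    by (auto simp: Sq_def T_def c_def)
  have Tclosed: "closed T" unfolding T_def Cost_def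
    by (intro closed_Collect_conj closed_Collect_le continuous_intros)
  have Tmeas: "T \<in> sets lborel" using Tclosed by simp
  have Sqmeas: "Sq \<in> sets lborel" unfolding Sq_def sets_lborel by (intro borel_closed closed_Times) auto
  have Sq_em: "emeasure lborel Sq = 1"
  proof -
    have "emeasure lborel Sq = emeasure (lborel \<Otimes>\<^sub>M lborel) ({0..1::real} \<times> {0..1::real})"
      by (simp add: Sq_def lborel_prod)
    also have "\<dots> = 1"
      by (subst lborel.emeasure_pair_measure_Times) simp_all
    finally show ?thesis .
  qed
  have T_em: "emeasure lborel T = ennreal (c^2 / (2 * t * (1 - t)))"
  proof -
    have "emeasure lborel T = emeasure (lborel \<Otimes>\<^sub>M lborel) T"
      by (simp add: lborel_prod)
    also have "\<dots> = (\<integral>\<^sup>+x. emeasure lborel (Pair x -` T) \<partial>lborel)"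
      using Tmeas by (intro lborel.emeasure_pair_measure_alt) (simp only: lborel_prod)
    also have "\<dots> = (\<integral>\<^sup>+x. ennreal (indicator {0..c/t} x * ((c - t * x) / (1 - t))) \<partial>lborel)"
    proof (rule nn_integral_cong)
      fix x :: real
      show "emeasure lborel (Pair x -` T) = ennreal (indicator {0..c/t} x * ((c - t * x) / (1 - t)))"
      proof (cases "0 \<le> x \<and> x \<le> c / t")
        case True
        have "Pair x -` T = {1 - (c - t * x) / (1 - t) .. 1}"
          using t1 by (auto simp: T_def Cost_def True field_simps)
        moreover have "0 \<le> (c - t * x) / (1 - t)"
          using True t0 t1 by (simp add: field_simps)
        ultimately show ?thesis using True by simp
      next
        case False
        have "Pair x -` T = {}"
        proof (cases "0 \<le> x")
          case True
          with False have "c < t * x" using t0 by (simp add: field_simps)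
          thus ?thesis using t1 by (auto simp: T_def Cost_def) (smt (verit) mult_nonneg_nonneg)
        qed (auto simp: T_def)
        thus ?thesis using False by simp
      qed
    qed
    also have "\<dots> = ennreal (c^2 / (2 * t * (1 - t)))"
      using nn_integral_has_integral_lebesgue[OF _ tri_integral[OF t0 t1 c0]] t0 t1
      by (simp add: field_simps)
    finally show ?thesis .
  qed
  have "area_lesser t h k = measure lborel (Sq - T)"
    unfolding area_lesser_def set_eq by simp
  also have "\<dots> = measure lborel Sq - measure lborel T"
    using Sq_em Sqmeas Tmeas TSq by (intro measure_Diff) simp_all
  also have "\<dots> = 1 - c^2 / (2 * t * (1 - t))"
    using Sq_em T_em t0 t1 by (simp add: measure_def)
  also have "\<dots> = 1 + (1 - k)^2 / 2 + h^2 / 2 - h * (1 - k) - (1 - k)^2 / (2 * t) - h^2 / (2 * (1 - t))"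
  proof -
    have gen: "\<And>u. t \<noteq> 0 \<Longrightarrow> u \<noteq> 0 \<Longrightarrow> t + u = 1 \<Longrightarrow>
      1 - (t * h + u * (1 - k))^2 / (2 * t * u) =
      1 + (1 - k)^2 / 2 + h^2 / 2 - h * (1 - k) - (1 - k)^2 / (2 * t) - h^2 / (2 * u)"
      by (simp add: field_simps power2_eq_square) algebra
    show ?thesis using gen[of "1 - t"] t0 t1 by (simp add: c_def Cost_def)
  qed
  finally show ?thesis .
qed

end
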